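(* Let $a>1$. Then, as $t\to-\infty$, $$f(t,a)\sim\left(-\frac{\pi t}{2}\right)^{1/2}a^{-t}\,\mathrm{erfi}\!\left[-(1+\ln a)\sqrt{-t/2}\right]\exp\!\left(\frac{t(1+\ln a)^{2}}{2}\right),$$ where $f(t,a)=t\int_0^1(ax)^{-tx}\,dx$. In particular $|f(t,a)|$ grows exponentially as $t\to-\infty$.
   Context: For real $a>0$ and real $t$, $f(t,a)=t\int_0^1 (ax)^{-tx}\,dx$, where $(ax)^{-tx}=\exp(-tx\ln(ax))$ for $x\in(0,1]$. $\mathrm{erfi}(x)=\frac{2}{\sqrt\pi}\int_0^x e^{z^2}\,dz$ is the imaginary error function. The notation $g\sim h$ means $g/h\to1$. *)

theory Defs
  imports "HOL-Analysis.Analysis" "HOL-Library.Landau_Symbols"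
begin

definition erfi :: "real \<Rightarrow> real" where
  "erfi x = 2 / sqrt pi * (if 0 \<le> x then integral {0..x} (\<lambda>z. exp (z\<^sup>2))
                                       else - integral {x..0} (\<lambda>z. exp (z\<^sup>2)))"

definition f :: "real \<Rightarrow> real \<Rightarrow> real" where
  "f t a = t * integral {0<..1} (\<lambda>x. exp (- t * x * ln (a * x)))"

end

theory Submission
  imports Defs "HOL-Real_Asymp.Real_Asymp"
begin

lemma lap:
  fixes \<phi> :: "real \<Rightarrow> real" and \<alpha> c B :: real
  assumes ap: "\<alpha> > 0" and cp: "c > 0" and Bp: "B > 0"
   and int: "\<And>s. s > 0 \<Longrightarrow> (\<lambda>v. exp (s * \<phi> v)) integrable_on {0..B}"
   and le: "\<And>v. v \<in> {0..B} \<Longrightarrow> \<phi> v \<le> - c * v"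
   and lim: "\<And>u. u \<ge> 0 \<Longrightarrow> ((\<lambda>s. s * \<phi> (u / s)) \<longlongrightarrow> - \<alpha> * u) at_top"
  shows "((\<lambda>s. s * integral {0..B} (\<lambda>v. exp (s * \<phi> v))) \<longlongrightarrow> 1/\<alpha>) at_top"
proof -
  define G where "G s u = (if u \<in> {0..s*B} then exp(s*\<phi>(u/s)) else 0)" for s u
  have key: "(G s has_integral s * integral {0..B} (\<lambda>v. exp(s*\<phi> v))) {0..}" if s: "s > 0" for s
  proof -
    have "((\<lambda>v. exp (s * \<phi> v)) has_integral integral {0..B} (\<lambda>v. exp(s*\<phi> v))) (cbox 0 B)"
      using int[OF s] by (simp add: has_integral_integral)
    from has_integral_affinity'[OF this, of "1/s" 0] s
    have "((\<lambda>x. exp (s * \<phi> (x/s))) has_integral s * integral {0..B} (\<lambda>v. exp(s*\<phi> v))) {0..s*B}"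
      by (simp add: field_simps)
    then show ?thesis unfolding G_def
      by (subst has_integral_restrict) (use s Bp in auto)
  qed
  have bound: "norm (G s u) \<le> exp (-c*u)" if "s > 0" "u \<in> {0..}" for s u
  proof (cases "u \<in> {0..s*B}")
    case True
    then have "u/s \<in> {0..B}" using that by (auto simp: field_simps)
    from le[OF this] have "s * \<phi> (u/s) \<le> s * (-c*(u/s))" using that by (intro mult_left_mono) auto
    then have "s * \<phi> (u/s) \<le> -c*u" using that by simp
    then show ?thesis using True by (simp add: G_def)
  next
    case False then show ?thesis unfolding G_def by (simp only: if_False) simp
  qed
  have conv: "((\<lambda>s. G s u) \<longlongrightarrow> exp(-\<alpha>*u)) at_top" if "u \<in> {0..}" for u
  proof -
    have "((\<lambda>s. exp(s*\<phi>(u/s))) \<longlongrightarrow> exp(-\<alpha>*u)) at_top"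
      using lim[of u] that by (intro tendsto_exp) auto
    moreover have "\<forall>\<^sub>F s in at_top. exp(s*\<phi>(u/s)) = G s u"
    proof -
      have "\<forall>\<^sub>F s in at_top. s \<ge> u/B + 1" by (rule eventually_ge_at_top)
      then show ?thesis
      proof eventually_elim
        case (elim s)
        then have "s > 0" using that Bp by (smt (verit) divide_nonneg_pos atLeast_iff)
        moreover have "u \<le> s*B" using elim Bp by (simp add: field_simps)
        ultimately show ?case using that by (simp add: G_def)
      qed
    qed
    ultimately show ?thesis by (rule Lim_transform_eventually)
  qed
  have hint: "(\<lambda>u. exp(-c*u)) integrable_on {0..}"
    using has_integral_exp_minus_to_infinity[OF cp, of 0] by blast
  have eint: "integral {0..} (\<lambda>u. exp(-\<alpha>*u)) = 1/\<alpha>"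
    using has_integral_exp_minus_to_infinity[OF ap, of 0] by (simp add: integral_unique)
  show ?thesis
  proof (rule tendsto_at_topI_sequentially)
    fix X :: "nat \<Rightarrow> real" assume X: "filterlim X at_top sequentially"
    then have "\<forall>\<^sub>F n in sequentially. X n > 0" by (simp add: filterlim_at_top_dense)
    then obtain N where N: "\<And>n. n \<ge> N \<Longrightarrow> X n > 0" by (auto simp: eventually_sequentially)
    have "(\<lambda>k. integral {0..} (G (X (k+N)))) \<longlonglongrightarrow> integral {0..} (\<lambda>u. exp(-\<alpha>*u))"
    proof (rule dominated_convergence(2)[OF _ hint])
      show "G (X (k+N)) integrable_on {0..}" for k using key[OF N[of "k+N"]] by (auto simp: integrable_on_def)
      show "norm (G (X (k+N)) u) \<le> exp(-c*u)" if "u \<in> {0..}" for k u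
        using bound[OF N[of "k+N"] that] by simp
      show "(\<lambda>k. G (X (k+N)) u) \<longlonglongrightarrow> exp(-\<alpha>*u)" if "u \<in> {0..}" for u
        using filterlim_compose[OF conv[OF that] X] by (rule LIMSEQ_ignore_initial_segment)
    qed
    then have "(\<lambda>k. X (k+N) * integral {0..B} (\<lambda>v. exp(X (k+N)*\<phi> v))) \<longlonglongrightarrow> 1/\<alpha>"
    proof -
      have "integral {0..} (G (X (k+N))) = X (k+N) * integral {0..B} (\<lambda>v. exp(X (k+N)*\<phi> v))" for k
        using key[OF N[of "k+N"]] by (simp add: integral_unique)
      then show ?thesis using \<open>(\<lambda>k. integral {0..} (G (X (k+N)))) \<longlonglongrightarrow> _\<close> eint by simp
    qed
    then show "(\<lambda>n. X n * integral {0..B} (\<lambda>v. exp(X n*\<phi> v))) \<longlonglongrightarrow> 1/\<alpha>"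
      by (rule LIMSEQ_offset)
  qed
qed

lemma integral_flip:
  fixes g :: "real \<Rightarrow> real"
  shows "integral {0..b} (\<lambda>v. g (b - v)) = integral {0..b} g"
proof -
  have "integral {0..b} (\<lambda>v. g (b - v)) = integral {0..b} ((\<lambda>x. g (-x)) \<circ> (+) (-b))"
    by (simp add: o_def)
  also have "\<dots> = integral {0 + -b..b + -b} (\<lambda>x. g (-x))"
    by (rule integral_shift_Icc_real)
  also have "\<dots> = integral {0..b} g" using Henstock_Kurzweil_Integration.integral_reflect_real[of b 0 g] by simp
  finally show ?thesis .
qed

lemma J2lim:
  fixes L :: real assumes L: "L > 0"
  shows "((\<lambda>s. s * integral {0..1+L} (\<lambda>v. exp (s * (v^2/2 - (1+L)* v)))) \<longlongrightarrow> 1/(1+L)) at_top"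
proof (rule lap)
  show "1 + L > 0" "(1+L)/2 > 0" "1 + L > 0" using L by auto
  show "(\<lambda>v. exp (s * (v^2/2 - (1+L)* v))) integrable_on {0..1+L}" for s
    by (intro integrable_continuous_interval continuous_intros) auto
  show "v^2/2 - (1+L)* v \<le> - ((1+L)/2) * v" if "v \<in> {0..1+L}" for v
  proof -
    have "v * v \<le> (1+L) * v" using that by (intro mult_right_mono) auto
    then show ?thesis by (simp add: power2_eq_square field_simps)
  qed
  show "((\<lambda>s. s * ((u/s)^2/2 - (1+L)*(u/s))) \<longlongrightarrow> - (1+L) * u) at_top" if "u \<ge> 0" for u
  proof -
    have "((\<lambda>s. u^2/2 * inverse s - (1+L)*u) \<longlongrightarrow> u^2/2 * 0 - (1+L)*u) at_top"
      by (intro tendsto_intros tendsto_inverse_0_at_top filterlim_ident)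
    moreover have "\<forall>\<^sub>F s in at_top. u^2/2 * inverse s - (1+L)*u = s * ((u/s)^2/2 - (1+L)*(u/s))"
      using eventually_gt_at_top[of 0] by eventually_elim (simp add: field_simps power2_eq_square)
    ultimately have "((\<lambda>s. s * ((u/s)^2/2 - (1+L)*(u/s))) \<longlongrightarrow> u^2/2 * 0 - (1+L)*u) at_top"
      by (rule Lim_transform_eventually)
    then show ?thesis by (simp only: mult_zero_right diff_0 minus_mult_left)
  qed
qed

lemma xlnx_cont:
  fixes a :: real assumes a: "a > 0"
  shows "continuous_on {0..1} (\<lambda>x. x * ln (a * x))"
proof -
  have "continuous (at x within {0..1}) (\<lambda>x. x * ln (a * x))" if x: "x \<in> {0..1}" for x
  proof (cases "x = 0")
    case True
    have "((\<lambda>x. x * (ln a + ln x)) \<longlongrightarrow> 0) (at_right 0)" by real_asymp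
    moreover have "\<forall>\<^sub>F x in at_right 0. x * (ln a + ln x) = x * ln (a * x)"
      using a by (auto simp: eventually_at_right_less ln_mult eventually_at_right_field intro!: exI[of _ 1])
    ultimately have "((\<lambda>x. x * ln (a * x)) \<longlongrightarrow> 0) (at_right 0)"
      by (rule Lim_transform_eventually)
    then have "((\<lambda>x. x * ln (a * x)) \<longlongrightarrow> 0) (at 0 within {0..1})"
      by (rule tendsto_mono[rotated]) (simp add: at_within_Icc_at_right)
    then show ?thesis using True by (simp add: continuous_within)
  next
    case False
    then have "x > 0" using x by auto
    then have "isCont (\<lambda>x. x * ln (a * x)) x" using a by (intro continuous_intros) auto
    then show ?thesis by (rule continuous_at_imp_continuous_at_within)
  qed
  then show ?thesis by (simp add: continuous_on_eq_continuous_within)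
qed

lemma J1lim:
  fixes a :: real assumes a: "a > 1"
  shows "((\<lambda>s. s * integral {0..1} (\<lambda>v. exp (s * ((1-v) * ln (a*(1-v)) - ln a)))) \<longlongrightarrow> 1/(1+ln a)) at_top"
proof (rule lap)
  have L: "ln a > 0" using a by simp
  show "1 + ln a > 0" "ln a > 0" "(1::real) > 0" using L by auto
  have c: "continuous_on {0..1} (\<lambda>v. (1-v) * ln (a*(1-v)))"
  proof -
    have "continuous_on {0..1} ((\<lambda>x. x * ln (a * x)) \<circ> (\<lambda>v. 1 - v))"
      by (rule continuous_on_compose) (auto intro!: continuous_intros continuous_on_subset[OF xlnx_cont] simp: a[THEN less_trans[OF zero_less_one]])
    then show ?thesis by (simp add: o_def)
  qed
  show "(\<lambda>v. exp (s * ((1-v) * ln (a*(1-v)) - ln a))) integrable_on {0..1}" for s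
    by (intro integrable_continuous_interval continuous_intros c)
  show "(1-v) * ln (a*(1-v)) - ln a \<le> - ln a * v" if v: "v \<in> {0..1}" for v
  proof (cases "v = 1")
    case True then show ?thesis by simp
  next
    case False
    then have v1: "1 - v > 0" using v by auto
    have "ln (1 - v) \<le> (1 - v) - 1" using v1 by (rule ln_le_minus_one)
    then have "ln (a*(1-v)) \<le> ln a - v" using v1 a by (simp add: ln_mult)
    then have "(1-v) * ln (a*(1-v)) \<le> (1-v) * (ln a - v)" using v1 by (intro mult_left_mono) auto
    moreover have "(1-v) * (ln a - v) - ln a \<le> - ln a * v" using v
      by (simp add: algebra_simps) (smt (verit, best) atLeastAtMost_iff mult_left_le_one_le)
    ultimately show ?thesis by linarith
  qed
  show "((\<lambda>s. s * ((1-u/s) * ln (a*(1-u/s)) - ln a)) \<longlongrightarrow> - (1 + ln a) * u) at_top" if "u \<ge> 0" for u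
  proof -
    have "((\<lambda>s. s * ((1-u/s) * (ln a + ln (1-u/s)) - ln a)) \<longlongrightarrow> - u - u * ln a) at_top"
      by real_asymp
    then have "((\<lambda>s. s * ((1-u/s) * (ln a + ln (1-u/s)) - ln a)) \<longlongrightarrow> - (1 + ln a) * u) at_top"
      by (simp add: algebra_simps)
    moreover have "\<forall>\<^sub>F s in at_top. s * ((1-u/s) * (ln a + ln (1-u/s)) - ln a) = s * ((1-u/s) * ln (a*(1-u/s)) - ln a)"
    proof -
      have "\<forall>\<^sub>F s in at_top. s > u" by (rule eventually_gt_at_top)
      then show ?thesis
      proof eventually_elim
        case (elim s)
        then have "1 - u/s > 0" using that by (simp add: field_simps)
        then show ?case using a by (simp add: ln_mult)
      qed
    qed
    ultimately show ?thesis by (rule Lim_transform_eventually)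
  qed
qed

theorem mainTheorem6:
  fixes a :: real
  assumes "a > 1"
  shows "(\<lambda>t. f t a) \<sim>[at_bot]
           (\<lambda>t. sqrt (- pi * t / 2) * a powr (- t)
                 * erfi (- (1 + ln a) * sqrt (- t / 2))
                 * exp (t * (1 + ln a)\<^sup>2 / 2))
         \<and> (\<exists>c>0. \<forall>\<^sub>F t in at_bot. \<bar>f t a\<bar> \<ge> exp (- c * t))"
proof -
  define L where "L = ln a"
  have L: "L > 0" using assms by (simp add: L_def)
  have apos: "a > 0" using assms by simp
  define J1 where "J1 s = s * integral {0..1} (\<lambda>v. exp (s * ((1-v) * ln (a*(1-v)) - ln a)))" for s
  define J2 where "J2 s = s * integral {0..1+L} (\<lambda>v. exp (s * (v^2/2 - (1+L) * v)))" for s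
  have J1l: "(J1 \<longlongrightarrow> 1/(1+L)) at_top" using J1lim[OF assms] unfolding J1_def[abs_def] L_def .
  have J2l: "(J2 \<longlongrightarrow> 1/(1+L)) at_top" using J2lim[OF L] unfolding J2_def[abs_def] .
  define R where "R t = sqrt (- pi * t / 2) * a powr (- t) * erfi (- (1 + ln a) * sqrt (- t / 2)) * exp (t * (1 + ln a)\<^sup>2 / 2)" for t
  have F: "f (-s) a = - (exp (s*L) * J1 s)" if s: "s > 0" for s
  proof -
    define h where "h x = exp (- (-s) * x * ln (a * x))" for x
    have "f (-s) a = (-s) * integral {0<..1} h" by (simp add: f_def h_def[abs_def])
    also have "integral {0<..1} h = integral {0..1} h"
      by (rule integral_subset_negligible) auto
    also have "\<dots> = integral {0..1} (\<lambda>v. h (1 - v))"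
      by (rule integral_flip[symmetric])
    also have "\<dots> = integral {0..1} (\<lambda>v. exp (s*L) * exp (s * ((1-v) * ln (a*(1-v)) - ln a)))"
    proof (rule integral_cong)
      fix v
      have "- (-s) * (1-v) * ln (a * (1-v)) = s*L + s * ((1-v) * ln (a*(1-v)) - ln a)"
        by (simp add: L_def algebra_simps)
      then show "h (1 - v) = exp (s*L) * exp (s * ((1-v) * ln (a*(1-v)) - ln a))"
        by (simp add: h_def exp_add[symmetric])
    qed
    finally show ?thesis by (simp add: J1_def)
  qed
  have RR: "R (-s) = - (exp (s*L) * J2 s)" if s: "s > 0" for s
  proof -
    define k where "k = sqrt (s/2)"
    have k: "k > 0" "k^2 = s/2" using s by (auto simp: k_def)
    define y where "y = (1+L) * k"
    have y: "y > 0" using k L by (simp add: y_def)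
    define e where "e z = exp (z^2)" for z :: real
    define I2 where "I2 = integral {0..1+L} (\<lambda>v. exp (s * (v^2/2 - (1+L) * v)))"
    have s1: "sqrt (- pi * (-s) / 2) = sqrt pi * k"
      by (simp add: k_def real_sqrt_mult[symmetric])
    have s2: "a powr (- (-s)) = exp (s*L)" using apos by (simp add: powr_def L_def)
    have s3: "erfi (- (1 + ln a) * sqrt (- (-s) / 2)) = 2 / sqrt pi * (- integral {-y..0} e)"
    proof -
      have "- (1 + ln a) * sqrt (- (-s) / 2) = -y" by (simp add: y_def k_def L_def algebra_simps)
      then show ?thesis using y by (simp add: erfi_def e_def[abs_def])
    qed
    have s4: "integral {-y..0} e = integral {0..y} e"
      using Henstock_Kurzweil_Integration.integral_reflect_real[of y 0 e] by (simp add: e_def[abs_def])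
    have "(e has_integral integral {0..y} e) (cbox 0 y)"
      unfolding e_def by (auto intro!: integrable_integral integrable_continuous_interval continuous_intros)
    from has_integral_affinity'[OF this k(1), of 0]
    have "((\<lambda>x. e (k * x)) has_integral integral {0..y} e / k) {0..1+L}"
    proof -
      assume H: "((\<lambda>x. e (k *\<^sub>R x + 0)) has_integral integral {0..y} e /\<^sub>R k ^ DIM(real))
          (cbox ((0 - 0) /\<^sub>R k) ((y - 0) /\<^sub>R k))"
      have q1: "cbox ((0 - 0) /\<^sub>R k) ((y - 0) /\<^sub>R k) = {0..1+L}" using k by (simp add: y_def)
      have q2: "integral {0..y} e /\<^sub>R k ^ DIM(real) = integral {0..y} e / k" by (simp add: divide_inverse_commute)
      have q3: "(\<lambda>x. e (k *\<^sub>R x + 0)) = (\<lambda>x. e (k * x))" by simp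
      show ?thesis using H unfolding q1 q2 q3 .
    qed
    then have s5: "integral {0..y} e = k * integral {0..1+L} (\<lambda>x. e (k * x))"
      using k by (simp add: integral_unique)
    have s6: "integral {0..1+L} (\<lambda>x. e (k * x)) = integral {0..1+L} (\<lambda>v. e (k * ((1+L) - v)))"
      by (rule integral_flip[symmetric])
    also have "\<dots> = integral {0..1+L} (\<lambda>v. exp (s * (1+L)^2/2) * exp (s * (v^2/2 - (1+L) * v)))"
    proof (rule integral_cong)
      fix v
      have "(k * ((1+L) - v))^2 = k^2 * ((1+L) - v)^2" by (simp add: power_mult_distrib)
      also have "\<dots> = s/2 * ((1+L) - v)^2" by (simp add: k(2))
      also have "\<dots> = s * (1+L)^2/2 + s * (v^2/2 - (1+L) * v)" by (simp add: power2_eq_square algebra_simps)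
      finally have "(k * ((1+L) - v))^2 = s * (1+L)^2/2 + s * (v^2/2 - (1+L) * v)" .
      then show "e (k * ((1+L) - v)) = exp (s * (1+L)^2/2) * exp (s * (v^2/2 - (1+L) * v))"
        by (simp add: e_def exp_add[symmetric])
    qed
    finally have s7: "integral {0..1+L} (\<lambda>x. e (k * x)) = exp (s * (1+L)^2/2) * I2"
      by (simp add: I2_def)
    have s8: "exp (- s * (1 + ln a)\<^sup>2 / 2) * exp (s * (1+L)^2/2) = 1"
      by (simp add: L_def exp_add[symmetric])
    have "R (-s) = sqrt pi * k * exp (s*L) * (2 / sqrt pi * (- (k * (exp (s * (1+L)^2/2) * I2)))) * exp (- s * (1 + ln a)\<^sup>2 / 2)"
      unfolding R_def s1 s2 s3 s4 s5 s7 by simp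
    also have "\<dots> = - (2 * k^2 * exp (s*L) * I2) * (exp (- s * (1 + ln a)\<^sup>2 / 2) * exp (s * (1+L)^2/2))"
      by (simp add: power2_eq_square field_simps)
    also have "\<dots> = - (exp (s*L) * J2 s)"
      unfolding s8 k(2) by (simp add: J2_def I2_def)
    finally show ?thesis .
  qed
  have J2pos: "\<forall>\<^sub>F s in at_top. J2 s > 0"
    using order_tendstoD(1)[OF J2l, of 0] L by simp
  have part1: "(\<lambda>t. f t a) \<sim>[at_bot] R"
  proof (rule asymp_equivI')
    have "((\<lambda>s. J1 s / J2 s) \<longlongrightarrow> (1/(1+L)) / (1/(1+L))) at_top"
      using J1l J2l L by (intro tendsto_divide) auto
    then have "((\<lambda>s. J1 s / J2 s) \<longlongrightarrow> 1) at_top" using L by simp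
    moreover have "\<forall>\<^sub>F s in at_top. J1 s / J2 s = f (-s) a / R (-s)"
      using J2pos eventually_gt_at_top[of 0]
    proof eventually_elim
      case (elim s)
      then show ?case using F[of s] RR[of s] by simp
    qed
    ultimately have "((\<lambda>s. f (-s) a / R (-s)) \<longlongrightarrow> 1) at_top"
      by (rule Lim_transform_eventually)
    then show "((\<lambda>t. f t a / R t) \<longlongrightarrow> 1) at_bot"
      by (subst filterlim_at_bot_mirror) simp
  qed
  have part2: "\<forall>\<^sub>F t in at_bot. \<bar>f t a\<bar> \<ge> exp (- (L/2) * t)"
  proof -
    have J1b: "\<forall>\<^sub>F s in at_top. J1 s > 1/(2*(1+L))"
      using order_tendstoD(1)[OF J1l, of "1/(2*(1+L))"] L by (simp add: field_simps)
    have "\<forall>\<^sub>F s in at_top. \<bar>f (-s) a\<bar> \<ge> exp (- (L/2) * (-s))"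
      using J1b eventually_ge_at_top[of "4*(1+L)/L"] eventually_gt_at_top[of 0]
    proof eventually_elim
      case (elim s)
      have "1 + s*L/2 \<le> exp (s*L/2)" by (rule exp_ge_add_one_self)
      moreover have "s * L \<ge> 4*(1+L)" using elim(2) L by (simp add: field_simps)
      ultimately have e2: "exp (s*L/2) \<ge> 2*(1+L)" by linarith
      have "\<bar>f (-s) a\<bar> = exp (s*L) * J1 s" using F[OF elim(3)] elim(1) L
        by (simp add: abs_mult) (smt (verit) divide_pos_pos exp_gt_zero mult_pos_pos)
      also have "exp (s*L) = exp (s*L/2) * exp (s*L/2)" by (simp add: exp_add[symmetric])
      finally have "\<bar>f (-s) a\<bar> = exp (s*L/2) * (exp (s*L/2) * J1 s)" by simp
      moreover have "exp (s*L/2) * J1 s \<ge> 1"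
      proof -
        have "exp (s*L/2) * J1 s \<ge> 2*(1+L) * (1/(2*(1+L)))"
          using e2 elim(1) L by (intro mult_mono) auto
        then show ?thesis using L by simp
      qed
      ultimately have "\<bar>f (-s) a\<bar> \<ge> exp (s*L/2) * 1"
        by (metis exp_ge_zero mult_left_mono)
      moreover have "- (L/2) * (-s) = s*L/2" by simp
      ultimately show ?case by (simp only: mult_1_right)
    qed
    then show ?thesis
      unfolding at_bot_mirror[where 'a=real] eventually_filtermap by simp
  qed
  show ?thesis
    using part1 part2 L unfolding R_def L_def by (intro conjI exI[of _ "ln a / 2"]) auto
qed

end
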